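(* Let $M\in\mathcal{G}$ be such that $C_M$ and $C_{M^{-1}}$ are invertible, and set $Z_M=C_M^{-1}D_M$, $Z_{M^{-1}}=C_{M^{-1}}^{-1}D_{M^{-1}}$. Then $$Z_M=(\mathbb{1}+\Delta_{M^{-1}})^{-1}(\mathbb{1}-\Delta_{M^{-1}}),\qquad Z_MJ=-JZ_M,\qquad M=C_M(\mathbb{1}+Z_M),$$ $$\mathbb{1}=C_{M^{-1}}C_M(\mathbb{1}-Z_M^2),\qquad Z_{M^{-1}}C_M=-C_MZ_M,$$ where $\Delta_{M}=-MJM^{-1}J$.
   Context: Either bosonic case ($\mathcal{G}=\mathrm{Sp}(2N,\mathbb{R})$ preserving $\Omega=\begin{pmatrix}0&\mathbb{1}\\-\mathbb{1}&0\end{pmatrix}$, $J^2=-\mathbb{1}$, $J\Omega J^\intercal=\Omega$, $-J\Omega>0$) or fermionic case ($\mathcal{G}=\mathrm{SO}(2N,\mathbb{R})$, $J$ orthogonal with $J^2=-\mathbb{1}$). For a real linear map $M$ of $\mathbb{R}^{2N}$: $C_M=\frac12(M-JMJ)$ (the part commuting with $J$) and $D_M=\frac12(M+JMJ)$ (the part anticommuting with $J$). *)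

theory Defs
  imports "HOL-Analysis.Analysis"
begin

text \<open>Phase space R^(2N) is modelled with index type 'n + 'n (positions Inl i, momenta Inr i),
  so that N = CARD('n) is arbitrary (N \<ge> 1).\<close>

definition Omega :: "real ^ ('n::finite + 'n) ^ ('n + 'n)" where
  "Omega = (\<chi> i j. (case (i, j) of
      (Inl a, Inr b) \<Rightarrow> (if a = b then 1 else 0)
    | (Inr a, Inl b) \<Rightarrow> (if a = b then -1 else 0)
    | _ \<Rightarrow> 0))"

definition symplectic :: "real ^ ('n::finite + 'n) ^ ('n + 'n) \<Rightarrow> bool" where
  "symplectic M \<longleftrightarrow> M ** Omega ** transpose M = Omega"

definition bosonic_J :: "real ^ ('n::finite + 'n) ^ ('n + 'n) \<Rightarrow> bool" where
  "bosonic_J J \<longleftrightarrow> J ** J = - mat 1 \<and> J ** Omega ** transpose J = Omega \<and>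
     transpose (- (J ** Omega)) = - (J ** Omega) \<and>
     (\<forall>x. x \<noteq> 0 \<longrightarrow> x \<bullet> ((- (J ** Omega)) *v x) > 0)"

definition special_orthogonal :: "real ^ ('n::finite + 'n) ^ ('n + 'n) \<Rightarrow> bool" where
  "special_orthogonal M \<longleftrightarrow> orthogonal_matrix M \<and> det M = 1"

definition fermionic_J :: "real ^ ('n::finite + 'n) ^ ('n + 'n) \<Rightarrow> bool" where
  "fermionic_J J \<longleftrightarrow> orthogonal_matrix J \<and> J ** J = - mat 1"

text \<open>C_M: part commuting with J; D_M: part anticommuting with J.\<close>
definition Cpart :: "real ^ 'm ^ 'm \<Rightarrow> real ^ 'm ^ 'm \<Rightarrow> real ^ 'm ^ 'm" where
  "Cpart J M = (1/2) *\<^sub>R (M - J ** M ** J)"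

definition Dpart :: "real ^ 'm ^ 'm \<Rightarrow> real ^ 'm ^ 'm \<Rightarrow> real ^ 'm ^ 'm" where
  "Dpart J M = (1/2) *\<^sub>R (M + J ** M ** J)"

definition Zmat :: "real ^ 'm ^ 'm \<Rightarrow> real ^ 'm ^ 'm \<Rightarrow> real ^ 'm ^ 'm" where
  "Zmat J M = matrix_inv (Cpart J M) ** Dpart J M"

definition Delta :: "real ^ 'm ^ 'm \<Rightarrow> real ^ 'm ^ 'm \<Rightarrow> real ^ 'm ^ 'm" where
  "Delta J M = - (M ** J ** matrix_inv M ** J)"

end

theory Submission imports Defs begin
type_synonym 'm mt = "real^'m^'m"

lemma mm_radd: "((A::'m::finite mt) + B) ** C = A ** C + B ** C"
  by (simp add: matrix_matrix_mult_def vec_eq_iff sum.distrib distrib_right)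
lemma mm_ladd: "(A::'m::finite mt) ** (B + C) = A ** B + A ** C"
  by (rule matrix_add_ldistrib)
lemma mm_rdiff: "((A::'m::finite mt) - B) ** C = A ** C - B ** C"
  by (simp add: matrix_matrix_mult_def vec_eq_iff sum_subtractf left_diff_distrib)
lemma mm_ldiff: "(A::'m::finite mt) ** (B - C) = A ** B - A ** C"
  by (simp add: matrix_matrix_mult_def vec_eq_iff sum_subtractf right_diff_distrib)
lemma mm_rneg: "(- (A::'m::finite mt)) ** C = - (A ** C)"
  by (simp add: matrix_matrix_mult_def vec_eq_iff sum_negf)
lemma mm_lneg: "(A::'m::finite mt) ** (- C) = - (A ** C)"
  by (simp add: matrix_matrix_mult_def vec_eq_iff sum_negf)
lemma mm_rscale: "(k *\<^sub>R (A::'m::finite mt)) ** C = k *\<^sub>R (A ** C)"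
  by (simp add: scalar_matrix_assoc)
lemma mm_lscale: "(A::'m::finite mt) ** (k *\<^sub>R C) = k *\<^sub>R (A ** C)"
  by (simp add: matrix_matrix_mult_def vec_eq_iff sum_distrib_left mult_ac)

lemma minv_left: "invertible (A::'m::finite mt) \<Longrightarrow> matrix_inv A ** A = mat 1"
  unfolding matrix_inv_def invertible_def by (rule someI2_ex) auto
lemma minv_right: "invertible (A::'m::finite mt) \<Longrightarrow> A ** matrix_inv A = mat 1"
  unfolding matrix_inv_def invertible_def by (rule someI2_ex) auto
lemma minv_unique: "(A::'m::finite mt) ** B = mat 1 \<Longrightarrow> matrix_inv A = B"
proof -
  assume h: "A ** B = mat 1"
  hence "invertible A" using invertible_right_inverse by blast
  hence "matrix_inv A ** A = mat 1" by (rule minv_left)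
  hence "matrix_inv A = matrix_inv A ** (A ** B)" using h by simp
  also have "\<dots> = B" by (simp add: matrix_mul_assoc \<open>matrix_inv A ** A = mat 1\<close>)
  finally show ?thesis .
qed

lemma Omega_sq: "(Omega::real^('n::finite+'n)^('n+'n)) ** Omega = - mat 1"
  unfolding Omega_def matrix_matrix_mult_def mat_def
  apply (simp add: vec_eq_iff UNIV_Plus_UNIV[symmetric] sum.Plus del: UNIV_Plus_UNIV)
  apply (intro allI)
  subgoal for i j by (cases i; cases j) (auto simp: if_distrib if_distribR cong: if_cong)
  done

lemma half_sum: "(1/2) *\<^sub>R (a - b) + (1/2) *\<^sub>R (a + b) = (a::'a::real_vector)"
proof -
  have "(1/2) *\<^sub>R (a - b) + (1/2) *\<^sub>R (a + b) = (1/2 + 1/2) *\<^sub>R a"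
    by (simp only: scaleR_diff_right scaleR_add_right scaleR_left_distrib) simp
  thus ?thesis by simp
qed

lemma mt_numeral: "(A::'m::finite mt) * numeral k = numeral k *\<^sub>R A"
  by (simp add: vec_eq_iff)

lemma core:
  fixes M N J :: "'m::finite mt"
  assumes NM: "N ** M = mat 1" and MN: "M ** N = mat 1" and JJ: "J ** J = - mat 1"
    and CM: "invertible (Cpart J M)" and CN: "invertible (Cpart J N)"
  shows "invertible (mat 1 + Delta J N) \<and>
         Zmat J M = matrix_inv (mat 1 + Delta J N) ** (mat 1 - Delta J N) \<and>
         Zmat J M ** J = - (J ** Zmat J M) \<and>
         M = Cpart J M ** (mat 1 + Zmat J M) \<and>
         mat 1 = Cpart J N ** Cpart J M ** (mat 1 - Zmat J M ** Zmat J M) \<and>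
         Zmat J N ** Cpart J M = - (Cpart J M ** Zmat J M)"
proof -
  have JJX: "J ** (J ** X) = - X" for X by (simp add: matrix_mul_assoc JJ mm_rneg)
  have NMX: "N ** (M ** X) = X" for X by (simp add: matrix_mul_assoc NM)
  have MNX: "M ** (N ** X) = X" for X by (simp add: matrix_mul_assoc MN)
  note R = matrix_mul_assoc[symmetric] mm_radd mm_ladd mm_rdiff mm_ldiff mm_rneg mm_lneg
     mm_rscale mm_lscale mt_numeral JJ JJX NM MN NMX MNX
  define C where "C = Cpart J M"
  define D where "D = Dpart J M"
  define C' where "C' = Cpart J N"
  define D' where "D' = Dpart J N"
  define Ci where "Ci = matrix_inv C"
  define Ci' where "Ci' = matrix_inv C'"
  have CCi: "C ** Ci = mat 1" "Ci ** C = mat 1" using CM by (simp_all add: C_def Ci_def minv_left minv_right)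
  have CCi': "C' ** Ci' = mat 1" "Ci' ** C' = mat 1" using CN by (simp_all add: C'_def Ci'_def minv_left minv_right)
  have CCiX: "C ** (Ci ** X) = X" for X by (simp add: matrix_mul_assoc CCi)
  have MCD: "M = C + D" by (simp add: C_def D_def Cpart_def Dpart_def half_sum)
  have CJ: "C ** J = J ** C" by (simp add: C_def Cpart_def R algebra_simps)
  have DJ: "D ** J = - (J ** D)" by (simp add: D_def Dpart_def R algebra_simps)
  have A1: "C' ** C + D' ** D = mat 1"
    by (simp add: C_def D_def C'_def D'_def Cpart_def Dpart_def R algebra_simps)
  have A2: "C' ** D + D' ** C = 0"
    by (simp add: C_def D_def C'_def D'_def Cpart_def Dpart_def R algebra_simps)
  have CiJ: "Ci ** J = J ** Ci"
  proof -
    have "Ci ** J = Ci ** J ** (C ** Ci)" by (simp add: CCi)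
    also have "\<dots> = Ci ** (C ** J) ** Ci" by (simp add: matrix_mul_assoc CJ)
    also have "\<dots> = J ** Ci" by (simp add: matrix_mul_assoc CCi)
    finally show ?thesis .
  qed
  have Z: "Zmat J M = Ci ** D" by (simp add: Zmat_def Ci_def C_def D_def)
  have Z': "Zmat J N = Ci' ** D'" by (simp add: Zmat_def Ci'_def C'_def D'_def)
  have g3: "Zmat J M ** J = - (J ** Zmat J M)"
    unfolding Z by (simp add: matrix_mul_assoc[symmetric] DJ mm_lneg) (simp add: matrix_mul_assoc CiJ)
  have g4: "M = C ** (mat 1 + Zmat J M)"
    unfolding Z by (simp add: mm_ladd matrix_mul_assoc CCi MCD)
  have C'D: "C' ** D = - (D' ** C)" using A2 by (simp add: eq_neg_iff_add_eq_0)
  have g5: "mat 1 = C' ** C ** (mat 1 - Zmat J M ** Zmat J M)"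
  proof -
    have "C' ** C ** (mat 1 - Zmat J M ** Zmat J M) = C' ** C - C' ** (C ** Ci) ** D ** Ci ** D"
      unfolding Z by (simp add: mm_ldiff matrix_mul_assoc)
    also have "\<dots> = C' ** C + D' ** C ** Ci ** D"
      by (simp add: CCi C'D mm_rneg)
    also have "\<dots> = mat 1"
      using A1 by (simp add: CCiX matrix_mul_assoc[symmetric])
    finally show ?thesis by simp
  qed
  have g6: "Zmat J N ** C = - (C ** Zmat J M)"
  proof -
    have "Zmat J N ** C = Ci' ** (D' ** C)" by (simp add: Z' matrix_mul_assoc)
    also have "\<dots> = - D" proof -
      have "D' ** C = - (C' ** D)" using C'D by simp
      thus ?thesis by (simp add: mm_lneg matrix_mul_assoc CCi')
    qed
    also have "\<dots> = - (C ** Zmat J M)" by (simp add: Z matrix_mul_assoc CCi)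
    finally show ?thesis .
  qed
  have invN: "matrix_inv N = M" using NM by (rule minv_unique)
  have P: "mat 1 + Delta J N = 2 *\<^sub>R (N ** C)"
    by (simp add: Delta_def invN C_def Cpart_def R algebra_simps)
  have Q: "mat 1 - Delta J N = 2 *\<^sub>R (N ** D)"
    by (simp add: Delta_def invN D_def Dpart_def R algebra_simps)
  have PB: "(2 *\<^sub>R (N ** C)) ** ((1/2) *\<^sub>R (Ci ** M)) = mat 1"
    by (simp add: mm_rscale mm_lscale matrix_mul_assoc[symmetric] CCiX NM)
  have Pinv: "matrix_inv (mat 1 + Delta J N) = (1/2) *\<^sub>R (Ci ** M)"
    unfolding P using PB by (rule minv_unique)
  have g1: "invertible (mat 1 + Delta J N)"
    unfolding P using PB invertible_right_inverse by blast
  have g2: "Zmat J M = matrix_inv (mat 1 + Delta J N) ** (mat 1 - Delta J N)"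
    unfolding Pinv Q Z by (simp add: mm_rscale mm_lscale matrix_mul_assoc[symmetric] MNX)
  show ?thesis using g1 g2 g3 g4 g5 g6 by (simp add: C_def C'_def)
qed
theorem lemma2:
  fixes M J :: "real ^ ('n::finite + 'n) ^ ('n + 'n)"
  assumes group_case: "(symplectic M \<and> bosonic_J J) \<or> (special_orthogonal M \<and> fermionic_J J)"
    and CM: "invertible (Cpart J M)"
    and CMi: "invertible (Cpart J (matrix_inv M))"
  shows "invertible (mat 1 + Delta J (matrix_inv M)) \<and>
         Zmat J M = matrix_inv (mat 1 + Delta J (matrix_inv M)) ** (mat 1 - Delta J (matrix_inv M)) \<and>
         Zmat J M ** J = - (J ** Zmat J M) \<and>
         M = Cpart J M ** (mat 1 + Zmat J M) \<and>
         mat 1 = Cpart J (matrix_inv M) ** Cpart J M ** (mat 1 - Zmat J M ** Zmat J M) \<and>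
         Zmat J (matrix_inv M) ** Cpart J M = - (Cpart J M ** Zmat J M)"
proof -
  have JJ: "J ** J = - mat 1"
    using group_case by (auto simp: bosonic_J_def fermionic_J_def)
  have invM: "invertible M"
    using group_case
  proof
    assume "symplectic M \<and> bosonic_J J"
    hence h: "M ** Omega ** transpose M = Omega" by (simp add: symplectic_def)
    have "M ** (Omega ** transpose M ** (- Omega)) = Omega ** (- Omega)"
      by (simp add: matrix_mul_assoc h)
    also have "\<dots> = mat 1" by (simp add: mm_lneg Omega_sq)
    finally show ?thesis using invertible_right_inverse by blast
  next
    assume "special_orthogonal M \<and> fermionic_J J"
    hence "transpose M ** M = mat 1" by (simp add: special_orthogonal_def orthogonal_matrix)
    thus ?thesis using invertible_left_inverse by blast
  qed
  show ?thesis
    by (rule core[OF minv_left[OF invM] minv_right[OF invM] JJ CM CMi])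
qed

end
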